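(* Every core network $\mathcal G$ with multiple input nodes $\iota_1,\dots,\iota_n$ ($n\ge2$) and output node $o$ supports input counterweight homeostasis: $\det\langle H\rangle$ is a multiple of an irreducible polynomial that is homogeneous of degree $1$ in the variables $f_{\iota_1,\mathcal I},\dots,f_{\iota_n,\mathcal I}$ (the determinant of the input counterweight homeostasis block).
   Context: A core network is a directed graph with input nodes $\iota_1,\dots,\iota_n$ and output node $o$ in which every node is upstream from $o$ and downstream from at least one input node (node $b$ is downstream from $a$ if there is a directed path from $a$ to $b$). An admissible system has one real variable per node, $\dot x_{\iota_m}=f_{\iota_m}(X,\mathcal I)$ for inputs and $\dot x_j=f_j(X)$ otherwise, with $f_{j,x_\ell}=\partial f_j/\partial x_\ell\equiv0$ unless there is an arrow $\ell\to j$ (every node self-coupled), and $f_{\iota_m,\mathcal I}\neq0$. The entries $f_{j,x_\ell}$ and $f_{\iota_m,\mathcal I}$ are regarded as independent indeterminates. The generalized homeostasis matrix $\langle H\rangle$ is the Jacobian $(f_{j,x_\ell})$ over all nodes (output last) with its last column replaced by the column with entry $-f_{\iota_m,\mathcal I}$ in row $\iota_m$ and $0$ elsewhere. By Frobenius–König theory there are permutation matrices $P,Q$ with $P\langle H\rangle Q$ block upper triangular with square fully indecomposable diagonal blocks (irreducible homeostasis blocks); the block containing the entries $f_{\iota_m,\mathcal I}$ is the input counterweight block. *)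

theory Defs
  imports "HOL-Library.Poly_Mapping" "HOL-Computational_Algebra.Factorial_Ring"
          "Jordan_Normal_Form.Determinant"
begin

text \<open>Indeterminates of the generalized homeostasis matrix:
  \<open>Fx j l\<close> stands for the partial derivative f_{j,x_l}, and
  \<open>FI m\<close> stands for f_{m,I} (m an input node).\<close>
datatype hvar = Fx nat nat | FI nat

type_synonym hpoly = "(hvar \<Rightarrow>\<^sub>0 nat) \<Rightarrow>\<^sub>0 real"

definition indet :: "hvar \<Rightarrow> hpoly" where
  "indet v = Poly_Mapping.single (Poly_Mapping.single v 1) 1"

text \<open>A network on nodes 0..<N, arrows E (a pair (l,j) is the arrow l -> j),
  input node set Inp and output node out is a core network.\<close>
definition core_network :: "nat \<Rightarrow> (nat \<times> nat) set \<Rightarrow> nat set \<Rightarrow> nat \<Rightarrow> bool" where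
  "core_network N E Inp out \<longleftrightarrow>
     E \<subseteq> {0..<N} \<times> {0..<N} \<and> Inp \<subseteq> {0..<N} \<and> out < N \<and> out \<notin> Inp \<and>
     (\<forall>j<N. (j, out) \<in> E\<^sup>* \<and> (\<exists>i\<in>Inp. (i, j) \<in> E\<^sup>*))"

text \<open>Generalized homeostasis matrix: the Jacobian (entry (j,l) is f_{j,x_l}, a
  free indeterminate when there is an arrow l -> j or l = j (self-coupling),
  zero otherwise), with the output column replaced by the column having
  entry -f_{m,I} in each input row m and 0 elsewhere.\<close>
definition gen_homeo_matrix :: "nat \<Rightarrow> (nat \<times> nat) set \<Rightarrow> nat set \<Rightarrow> nat \<Rightarrow> hpoly mat" where
  "gen_homeo_matrix N E Inp out = mat N N (\<lambda>(j, l).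
     if l = out then (if j \<in> Inp then - indet (FI j) else 0)
     else if (l, j) \<in> E \<or> l = j then indet (Fx j l) else 0)"

definition input_degree :: "nat set \<Rightarrow> (hvar \<Rightarrow>\<^sub>0 nat) \<Rightarrow> nat" where
  "input_degree Inp m = (\<Sum>i\<in>Inp. Poly_Mapping.lookup m (FI i))"

definition homogeneous_deg1_in_inputs :: "nat set \<Rightarrow> hpoly \<Rightarrow> bool" where
  "homogeneous_deg1_in_inputs Inp p \<longleftrightarrow>
     p \<noteq> 0 \<and> (\<forall>m\<in>Poly_Mapping.keys p. input_degree Inp m = 1)"

end

theory Submission
  imports Defs "HOL-Computational_Algebra.Polynomial" "HOL-Library.Nat_Bijection"
    "HOL-Library.Transitive_Closure_Table" "HOL-Combinatorics.Cycles"
begin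


fun enc :: "hvar \<Rightarrow> nat" where
  "enc (Fx a b) = prod_encode (0, prod_encode (a, b))"
| "enc (FI a) = prod_encode (1, a)"

lemma inj_enc: "inj enc"
proof
  fix x y assume "enc x = enc y" then show "x = y"
    by (cases x; cases y) (auto dest!: inj_onD[OF inj_prod_encode, rotated 2])
qed

instantiation hvar :: linorder begin
definition "less_eq_hvar x y \<longleftrightarrow> enc x \<le> enc y"
definition "less_hvar x y \<longleftrightarrow> enc x < enc y"
instance by standard (auto simp: less_eq_hvar_def less_hvar_def inj_eq[OF inj_enc])
end



definition rho :: "((hvar \<Rightarrow>\<^sub>0 nat) \<Rightarrow> nat) \<Rightarrow> hpoly \<Rightarrow> hpoly poly" where
  "rho w p = (\<Sum>m\<in>Poly_Mapping.keys p. monom (Poly_Mapping.single m (Poly_Mapping.lookup p m)) (w m))"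

lemma sum_singles: "(\<Sum>m\<in>Poly_Mapping.keys p. Poly_Mapping.single m (Poly_Mapping.lookup p m)) = (p::hpoly)"
proof (rule poly_mapping_eqI)
  fix k
  have "Poly_Mapping.lookup (\<Sum>m\<in>Poly_Mapping.keys p. Poly_Mapping.single m (Poly_Mapping.lookup p m)) k
     = (\<Sum>m\<in>Poly_Mapping.keys p. (Poly_Mapping.lookup p m when m = k))"
    by (simp add: lookup_sum lookup_single)
  also have "\<dots> = Poly_Mapping.lookup p k"
    by (cases "k \<in> Poly_Mapping.keys p") (auto simp: when_def in_keys_iff)
  finally show "Poly_Mapping.lookup (\<Sum>m\<in>Poly_Mapping.keys p. Poly_Mapping.single m (Poly_Mapping.lookup p m)) k = Poly_Mapping.lookup p k" .
qed

lemma rho_superset: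
  assumes "finite S" "Poly_Mapping.keys p \<subseteq> S"
  shows "rho w p = (\<Sum>m\<in>S. monom (Poly_Mapping.single m (Poly_Mapping.lookup p m)) (w m))"
  unfolding rho_def
  by (rule sum.mono_neutral_left) (use assms in \<open>auto simp: in_keys_iff\<close>)

lemma rho_add: "rho w (p + q) = rho w p + rho w q"
proof -
  let ?S = "Poly_Mapping.keys p \<union> Poly_Mapping.keys q"
  have f: "finite ?S" by simp
  have "rho w (p + q) = (\<Sum>m\<in>?S. monom (Poly_Mapping.single m (Poly_Mapping.lookup (p+q) m)) (w m))"
    by (rule rho_superset[OF f]) (rule keys_add)
  also have "\<dots> = (\<Sum>m\<in>?S. monom (Poly_Mapping.single m (Poly_Mapping.lookup p m)) (w m))
     + (\<Sum>m\<in>?S. monom (Poly_Mapping.single m (Poly_Mapping.lookup q m)) (w m))"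
    by (simp add: lookup_add single_add add_monom[symmetric] sum.distrib)
  also have "\<dots> = rho w p + rho w q"
    by (simp add: rho_superset[OF f])
  finally show ?thesis .
qed

lemma rho_zero[simp]: "rho w 0 = 0" by (simp add: rho_def)

lemma rho_sum: "rho w (sum f A) = (\<Sum>a\<in>A. rho w (f a))"
  by (induction A rule: infinite_finite_induct) (auto simp: rho_add)

lemma rho_single[simp]: "rho w (Poly_Mapping.single m c) = monom (Poly_Mapping.single m c) (w m)"
  by (cases "c = 0") (auto simp: rho_def)

lemma rho_mult:
  assumes add: "\<And>a b. w (a + b) = w a + w b"
  shows "rho w (p * q) = rho w p * rho w q"
proof -
  let ?P = "Poly_Mapping.keys p" and ?Q = "Poly_Mapping.keys q"
  have "p * q = (\<Sum>a\<in>?P. Poly_Mapping.single a (Poly_Mapping.lookup p a)) * (\<Sum>b\<in>?Q. Poly_Mapping.single b (Poly_Mapping.lookup q b))"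
    by (simp add: sum_singles)
  also have "\<dots> = (\<Sum>a\<in>?P. \<Sum>b\<in>?Q. Poly_Mapping.single (a+b) (Poly_Mapping.lookup p a * Poly_Mapping.lookup q b))"
    unfolding sum_distrib_right by (simp add: sum_distrib_left mult_single)
  finally have pq: "p * q = \<dots>" .
  have "rho w (p * q) = (\<Sum>a\<in>?P. \<Sum>b\<in>?Q. monom (Poly_Mapping.single a (Poly_Mapping.lookup p a)) (w a) * monom (Poly_Mapping.single b (Poly_Mapping.lookup q b)) (w b))"
    unfolding pq by (simp add: rho_sum add mult_monom mult_single)
  also have "\<dots> = rho w p * rho w q"
    unfolding rho_def sum_distrib_right by (simp add: sum_distrib_left)
  finally show ?thesis .
qed

lemma rho_one: assumes "w 0 = 0" shows "rho w 1 = 1"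
  using assms rho_single[of w 0 1] by (simp add: monom_0 one_pCons)

lemma poly_rho_1[simp]: "poly (rho w p) 1 = p"
  by (simp add: rho_def poly_sum poly_monom sum_singles)

lemma rho_eq_0_iff[simp]: "rho w p = 0 \<longleftrightarrow> p = 0"
  by (metis poly_rho_1 poly_0 rho_zero)

lemma lookup_coeff_rho:
  "Poly_Mapping.lookup (coeff (rho w p) k) m = (if w m = k then Poly_Mapping.lookup p m else 0)"
proof -
  have "coeff (rho w p) k = (\<Sum>x\<in>Poly_Mapping.keys p. if w x = k then Poly_Mapping.single x (Poly_Mapping.lookup p x) else 0)"
    by (simp add: rho_def coeff_sum)
  then have "Poly_Mapping.lookup (coeff (rho w p) k) m =
     (\<Sum>x\<in>Poly_Mapping.keys p. Poly_Mapping.lookup (if w x = k then Poly_Mapping.single x (Poly_Mapping.lookup p x) else 0) m)"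
    by (simp add: lookup_sum)
  also have "\<dots> = (\<Sum>x\<in>Poly_Mapping.keys p. if w x = k then (Poly_Mapping.lookup p x when x = m) else 0)"
    by (rule sum.cong) (auto simp: lookup_single)
  also have "\<dots> = (if w m = k then Poly_Mapping.lookup p m else 0)"
    by (cases "m \<in> Poly_Mapping.keys p") (auto simp: when_def in_keys_iff if_distrib sum.If_cases)
  finally show ?thesis .
qed



definition tdeg :: "(hvar \<Rightarrow>\<^sub>0 nat) \<Rightarrow> nat" where
  "tdeg m = sum (Poly_Mapping.lookup m) (Poly_Mapping.keys m)"

lemma tdeg_superset: "finite S \<Longrightarrow> Poly_Mapping.keys m \<subseteq> S \<Longrightarrow> tdeg m = sum (Poly_Mapping.lookup m) S"
  unfolding tdeg_def by (rule sum.mono_neutral_left) (auto simp: in_keys_iff)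

lemma tdeg_add: "tdeg (a + b) = tdeg a + tdeg b"
proof -
  let ?S = "Poly_Mapping.keys a \<union> Poly_Mapping.keys b"
  have "tdeg (a + b) = sum (Poly_Mapping.lookup (a+b)) ?S" by (rule tdeg_superset) (auto dest: keys_add[THEN subsetD])
  also have "\<dots> = sum (Poly_Mapping.lookup a) ?S + sum (Poly_Mapping.lookup b) ?S" by (simp add: lookup_add sum.distrib)
  also have "\<dots> = tdeg a + tdeg b" using tdeg_superset[of ?S a] tdeg_superset[of ?S b] by simp
  finally show ?thesis .
qed

lemma tdeg_0_iff: "tdeg m = 0 \<longleftrightarrow> m = 0"
  by (auto simp: tdeg_def in_keys_iff intro: poly_mapping_eqI)

lemma input_degree_add: "input_degree Inp (a + b) = input_degree Inp a + input_degree Inp b"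
  by (simp add: input_degree_def lookup_add sum.distrib)

lemma input_degree_0: "input_degree Inp 0 = 0"
  by (simp add: input_degree_def)

lemma homog_iff:
  "homogeneous_deg1_in_inputs Inp p \<longleftrightarrow> p \<noteq> 0 \<and> rho (input_degree Inp) p = monom p 1"
proof
  assume h: "homogeneous_deg1_in_inputs Inp p"
  have "rho (input_degree Inp) p = monom p 1"
  proof (rule poly_eqI, rule poly_mapping_eqI)
    fix k m
    show "Poly_Mapping.lookup (coeff (rho (input_degree Inp) p) k) m = Poly_Mapping.lookup (coeff (monom p 1) k) m"
      using h unfolding lookup_coeff_rho homogeneous_deg1_in_inputs_def
      by (cases "m \<in> Poly_Mapping.keys p") (auto simp: in_keys_iff)
  qed
  then show "p \<noteq> 0 \<and> rho (input_degree Inp) p = monom p 1" using h by (simp add: homogeneous_deg1_in_inputs_def)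
next
  assume h: "p \<noteq> 0 \<and> rho (input_degree Inp) p = monom p 1"
  have "input_degree Inp m = 1" if "m \<in> Poly_Mapping.keys p" for m
  proof (rule ccontr)
    assume ne: "input_degree Inp m \<noteq> 1"
    have "Poly_Mapping.lookup (coeff (rho (input_degree Inp) p) (input_degree Inp m)) m = Poly_Mapping.lookup p m"
      by (simp add: lookup_coeff_rho)
    then show False using h ne that by (simp add: in_keys_iff)
  qed
  then show "homogeneous_deg1_in_inputs Inp p" using h by (simp add: homogeneous_deg1_in_inputs_def)
qed

lemma const_unit:
  assumes "c \<noteq> 0" "degree (rho tdeg c) = 0"
  shows "c dvd 1"
proof -
  have "\<And>m. m \<noteq> 0 \<Longrightarrow> Poly_Mapping.lookup c m = 0"
  proof -
    fix m :: "hvar \<Rightarrow>\<^sub>0 nat" assume "m \<noteq> 0"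
    then have "tdeg m \<noteq> 0" by (simp add: tdeg_0_iff)
    then have "coeff (rho tdeg c) (tdeg m) = 0" using assms(2) by (simp add: coeff_eq_0)
    then have "Poly_Mapping.lookup (coeff (rho tdeg c) (tdeg m)) m = 0" by simp
    then show "Poly_Mapping.lookup c m = 0" by (simp add: lookup_coeff_rho)
  qed
  then have cs: "c = Poly_Mapping.single 0 (Poly_Mapping.lookup c 0)"
    by (intro poly_mapping_eqI) (auto simp: lookup_single when_def)
  with assms(1) have r: "Poly_Mapping.lookup c 0 \<noteq> 0" by (metis single_zero)
  have "c * Poly_Mapping.single 0 (1 / Poly_Mapping.lookup c 0) = 1"
    by (subst cs) (simp add: mult_single r)
  then show ?thesis by (metis dvdI)
qed

lemma factor_case:
  assumes cd: "c * d = a" and ha: "homogeneous_deg1_in_inputs Inp a"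
    and dc: "degree (rho (input_degree Inp) c) = 0"
  shows "homogeneous_deg1_in_inputs Inp d"
proof -
  let ?w = "input_degree Inp"
  have add: "\<And>x y. ?w (x + y) = ?w x + ?w y" by (rule input_degree_add)
  have a: "a \<noteq> 0" "rho ?w a = monom a 1" using ha homog_iff by auto
  have c0: "c \<noteq> 0" "d \<noteq> 0" using cd a by auto
  have X: "rho ?w c = [:c:]"
  proof -
    have e: "rho ?w c = [:coeff (rho ?w c) 0:]" using dc by (metis degree_0_id)
    have "c = poly (rho ?w c) 1" by simp
    also have "\<dots> = coeff (rho ?w c) 0" by (subst e) simp
    finally show ?thesis using e by simp
  qed
  have "rho ?w c * rho ?w d = monom a 1" using cd a by (metis rho_mult add)
  then have Y: "smult c (rho ?w d) = monom a 1" using X by simp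
  have ck: "coeff (rho ?w d) k = 0" if "k \<noteq> 1" for k
  proof -
    have "c * coeff (rho ?w d) k = 0" using arg_cong[OF Y, of "\<lambda>p. coeff p k"] that by simp
    then show ?thesis using c0 by simp
  qed
  have "rho ?w d = monom (coeff (rho ?w d) 1) 1"
    by (rule poly_eqI) (auto simp: ck)
  moreover have "poly (rho ?w d) 1 = coeff (rho ?w d) 1"
    by (subst \<open>rho ?w d = _\<close>) (simp add: poly_monom)
  ultimately have "rho ?w d = monom d 1" by simp
  then show ?thesis using c0 homog_iff by auto
qed

lemma exists_irred:
  assumes hD: "homogeneous_deg1_in_inputs Inp D"
  shows "\<exists>p. irreducible p \<and> homogeneous_deg1_in_inputs Inp p \<and> p dvd D"
proof -
  let ?w = "input_degree Inp"
  have add: "\<And>x y. ?w (x + y) = ?w x + ?w y" by (rule input_degree_add)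
  have addt: "\<And>x y. tdeg (x + y) = tdeg x + tdeg y" by (rule tdeg_add)
  define S where "S = {p. homogeneous_deg1_in_inputs Inp p \<and> p dvd D}"
  have "D \<in> S" using hD by (simp add: S_def)
  define n where "n = (LEAST n. \<exists>p\<in>S. degree (rho tdeg p) = n)"
  have "\<exists>p\<in>S. degree (rho tdeg p) = n" unfolding n_def
    by (rule LeastI_ex) (use \<open>D \<in> S\<close> in blast)
  then obtain a where aS: "a \<in> S" and an: "degree (rho tdeg a) = n" by blast
  have minimal: "n \<le> degree (rho tdeg p)" if "p \<in> S" for p
    unfolding n_def by (rule Least_le) (use that in blast)
  have ha: "homogeneous_deg1_in_inputs Inp a" and aD: "a dvd D" using aS by (auto simp: S_def)
  have a: "a \<noteq> 0" "rho ?w a = monom a 1" using ha homog_iff by auto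
  have "\<not> a dvd 1"
  proof
    assume "a dvd 1"
    then obtain b where "1 = a * b" by (auto elim: dvdE)
    then have "rho ?w a * rho ?w b = 1" by (metis rho_mult add rho_one input_degree_0)
    then have "degree (rho ?w a * rho ?w b) = 0" by simp
    moreover have "rho ?w b \<noteq> 0" using \<open>rho ?w a * rho ?w b = 1\<close> by auto
    ultimately show False using a by (simp add: degree_mult_eq degree_monom_eq)
  qed
  moreover have "c dvd 1 \<or> d dvd 1" if acd: "a = c * d" for c d
  proof -
    have cd0: "c \<noteq> 0" "d \<noteq> 0" using a acd by auto
    have "degree (rho ?w c) + degree (rho ?w d) = 1"
      using a acd cd0 by (metis rho_mult add degree_mult_eq rho_eq_0_iff degree_monom_eq)
    then consider "degree (rho ?w c) = 0" | "degree (rho ?w d) = 0" by linarith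
    then show ?thesis
    proof cases
      case 1
      then have hd: "homogeneous_deg1_in_inputs Inp d" using factor_case[of c d a Inp] acd ha by simp
      have "d dvd D" using aD acd by (meson dvd_mult_right dvd_trans)
      with hd have "d \<in> S" by (simp add: S_def)
      then have "n \<le> degree (rho tdeg d)" by (rule minimal)
      moreover have "degree (rho tdeg a) = degree (rho tdeg c) + degree (rho tdeg d)"
        using acd cd0 by (simp add: rho_mult[OF addt] degree_mult_eq)
      ultimately have "degree (rho tdeg c) = 0" using an by linarith
      then show ?thesis using const_unit cd0 by blast
    next
      case 2
      then have hd: "homogeneous_deg1_in_inputs Inp c" using factor_case[of d c a Inp] acd ha by (simp add: mult.commute)
      have "c dvd D" using aD acd by (meson dvd_mult_left dvd_trans)
      with hd have "c \<in> S" by (simp add: S_def)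
      then have "n \<le> degree (rho tdeg c)" by (rule minimal)
      moreover have "degree (rho tdeg a) = degree (rho tdeg c) + degree (rho tdeg d)"
        using acd cd0 by (simp add: rho_mult[OF addt] degree_mult_eq)
      ultimately have "degree (rho tdeg d) = 0" using an by linarith
      then show ?thesis using const_unit cd0 by blast
    qed
  qed
  ultimately have "irreducible a" using a by (auto simp: irreducible_def)
  then show ?thesis using ha aD by blast
qed



definition var :: "nat \<Rightarrow> nat \<Rightarrow> nat \<Rightarrow> hvar" where
  "var out i l = (if l = out then FI i else Fx i l)"

definition ent :: "(nat \<times> nat) set \<Rightarrow> nat set \<Rightarrow> nat \<Rightarrow> nat \<Rightarrow> nat \<Rightarrow> real" where
  "ent E Inp out i l = (if l = out then (if i \<in> Inp then -1 else 0)
      else if (l, i) \<in> E \<or> l = i then 1 else 0)"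

definition mu :: "nat \<Rightarrow> nat \<Rightarrow> (nat \<Rightarrow> nat) \<Rightarrow> (hvar \<Rightarrow>\<^sub>0 nat)" where
  "mu N out p = (\<Sum>i=0..<N. Poly_Mapping.single (var out i (p i)) 1)"

lemma var_inj: "var out i l = var out j l' \<Longrightarrow> i = j \<and> l = l'"
  by (auto simp: var_def split: if_splits)

lemma entry:
  assumes "i < N" "l < N"
  shows "gen_homeo_matrix N E Inp out $$ (i, l) =
    Poly_Mapping.single (Poly_Mapping.single (var out i l) 1) (ent E Inp out i l)"
  using assms by (auto simp: gen_homeo_matrix_def var_def ent_def indet_def single_uminus)

lemma prod_single: "finite S \<Longrightarrow> (\<Prod>i\<in>S. Poly_Mapping.single (f i) (g i)) =
   Poly_Mapping.single (\<Sum>i\<in>S. f i) (\<Prod>i\<in>S. g i :: real)"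
  by (induction S rule: finite_induct) (auto simp: mult_single)

lemma det_formula:
  "det (gen_homeo_matrix N E Inp out) =
    (\<Sum>p\<in>{p. p permutes {0..<N}}. Poly_Mapping.single (mu N out p)
        (of_int (sign p) * (\<Prod>i=0..<N. ent E Inp out i (p i))))"
proof -
  have M: "gen_homeo_matrix N E Inp out \<in> carrier_mat N N" by (simp add: gen_homeo_matrix_def)
  show ?thesis
    unfolding det_def'[OF M]
  proof (rule sum.cong[OF refl])
    fix p assume "p \<in> {p. p permutes {0..<N}}"
    then have pi: "i < N \<Longrightarrow> p i < N" for i by (auto dest: permutes_in_image)
    have "(\<Prod>i=0..<N. gen_homeo_matrix N E Inp out $$ (i, p i)) =
      (\<Prod>i=0..<N. Poly_Mapping.single (Poly_Mapping.single (var out i (p i)) 1) (ent E Inp out i (p i)))"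
      by (rule prod.cong) (auto simp: entry pi)
    also have "\<dots> = Poly_Mapping.single (mu N out p) (\<Prod>i=0..<N. ent E Inp out i (p i))"
      by (simp add: prod_single mu_def)
    finally show "of_int (sign p) * (\<Prod>i=0..<N. gen_homeo_matrix N E Inp out $$ (i, p i)) =
      Poly_Mapping.single (mu N out p) (of_int (sign p) * (\<Prod>i=0..<N. ent E Inp out i (p i)))"
      by (simp add: single_of_int[symmetric] mult_single del: single_of_int)
  qed
qed

lemma lookup_det:
  "Poly_Mapping.lookup (det (gen_homeo_matrix N E Inp out)) m =
    (\<Sum>p\<in>{p. p permutes {0..<N}}. ((of_int (sign p) * (\<Prod>i=0..<N. ent E Inp out i (p i))) when mu N out p = m))"
  by (simp add: det_formula lookup_sum lookup_single)

lemma lookup_mu: "Poly_Mapping.lookup (mu N out p) v = (\<Sum>i=0..<N. (1 when var out i (p i) = v))"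
  by (simp add: mu_def lookup_sum lookup_single)

lemma lookup_mu_FI: "Poly_Mapping.lookup (mu N out p) (FI j) = (if j < N \<and> p j = out then 1 else 0)"
proof -
  have "Poly_Mapping.lookup (mu N out p) (FI j) = (\<Sum>i=0..<N. (if i = j \<and> p i = out then 1 else 0))"
    unfolding lookup_mu by (rule sum.cong) (auto simp: var_def when_def)
  also have "\<dots> = (\<Sum>i=0..<N. (if i = j then (if p j = out then 1 else 0) else 0))"
    by (rule sum.cong) auto
  also have "\<dots> = (if j < N \<and> p j = out then 1 else 0)"
    by simp
  finally show ?thesis .
qed

lemma mu_inj:
  assumes p: "p permutes {0..<N}" and q: "q permutes {0..<N}" and eq: "mu N out p = mu N out q"
  shows "p = q"
proof
  fix j show "p j = q j"
  proof (cases "j < N")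
    case True
    have "Poly_Mapping.lookup (mu N out p) (var out j (p j)) \<noteq> 0"
      unfolding lookup_mu using True by (auto simp: when_def)
    then have "Poly_Mapping.lookup (mu N out q) (var out j (p j)) \<noteq> 0"
      using eq by simp
    then have "(\<Sum>i=0..<N. (1 when var out i (q i) = var out j (p j))) \<noteq> (0::nat)"
      by (simp add: lookup_mu)
    then obtain i where "var out i (q i) = var out j (p j)"
      by (auto simp: when_def split: if_splits)
    then show ?thesis using var_inj by metis
  next
    case False
    then show ?thesis using p q by (simp add: permutes_def)
  qed
qed



lemma path_facts:
  "rtrancl_path r x xs y \<Longrightarrow> (\<forall>i<length xs. r ((x#xs)!i) (xs!i)) \<and> last (x#xs) = y"
proof (induction rule: rtrancl_path.induct)
  case (base x) then show ?case by simp
next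
  case (step x y ys z)
  then show ?case by (auto simp: nth_Cons split: nat.splits)
qed

lemma exists_sigma:
  assumes core: "core_network N E Inp out" and mI: "m \<in> Inp"
  shows "\<exists>\<sigma>. \<sigma> permutes {0..<N} \<and> (\<forall>j<N. ent E Inp out j (\<sigma> j) \<noteq> 0)"
proof -
  have EN: "E \<subseteq> {0..<N} \<times> {0..<N}" and mN: "m < N" and outN: "out < N" and oI: "out \<notin> Inp"
    and reach: "(m, out) \<in> E\<^sup>*" using core mI by (auto simp: core_network_def)
  have "(\<lambda>a b. (a, b) \<in> E)\<^sup>*\<^sup>* m out" using reach by (simp add: rtranclp_rtrancl_eq)
  then obtain xs0 where "rtrancl_path (\<lambda>a b. (a, b) \<in> E) m xs0 out" by (auto simp: rtranclp_eq_rtrancl_path)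
  then obtain xs where P: "rtrancl_path (\<lambda>a b. (a, b) \<in> E) m xs out" and dist: "distinct (m # xs)"
    by (rule rtrancl_path_distinct)
  from path_facts[OF P] have edges: "\<And>i. i < length xs \<Longrightarrow> ((m#xs)!i, xs!i) \<in> E"
    and lst: "last (m#xs) = out" by auto
  have mo: "m \<noteq> out" using mI oI by auto
  then have xsne: "xs \<noteq> []" using lst by auto
  define vs where "vs = m # xs"
  define k where "k = length xs"
  have lvs: "length vs = Suc k" by (simp add: vs_def k_def)
  have vsk: "vs ! k = out" using lst xsne by (simp add: vs_def k_def last_conv_nth)
  have vs0: "vs ! 0 = m" by (simp add: vs_def)
  have dvs: "distinct vs" using dist by (simp add: vs_def)
  have vsN: "set vs \<subseteq> {0..<N}"
  proof
    fix v assume "v \<in> set vs"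
    then consider "v = m" | "v \<in> set xs" by (auto simp: vs_def)
    then show "v \<in> {0..<N}"
    proof cases
      case 1 then show ?thesis using mN by simp
    next
      case 2 then obtain i where "i < length xs" "v = xs ! i" by (auto simp: in_set_conv_nth)
      then show ?thesis using edges[of i] EN by auto
    qed
  qed
  define cs where "cs = rev vs"
  define \<sigma> where "\<sigma> = cycle_of_list cs"
  have scs: "set cs = set vs" by (simp add: cs_def)
  have perm: "\<sigma> permutes {0..<N}"
    unfolding \<sigma>_def by (rule permutes_subset[OF cycle_permutes]) (use vsN scs in auto)
  have rot: "map \<sigma> cs = rotate1 cs"
    using cyclic_rotation[of cs 1] dvs by (simp add: \<sigma>_def cs_def)
  have lcs: "length cs = Suc k" by (simp add: cs_def lvs)
  have csi: "\<sigma> (cs ! i) = cs ! (Suc i mod Suc k)" if "i \<le> k" for i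
  proof -
    have "\<sigma> (cs ! i) = map \<sigma> cs ! i" using that lcs by simp
    also have "\<dots> = cs ! (Suc i mod Suc k)" using that lcs by (simp add: rot nth_rotate1)
    finally show ?thesis .
  qed
  have csv: "cs ! i = vs ! (k - i)" if "i \<le> k" for i
    using that lvs by (simp add: cs_def rev_nth)
  have s0: "\<sigma> m = out"
  proof -
    have "\<sigma> (cs ! k) = cs ! 0" using csi[of k] by simp
    then show ?thesis using csv[of k] csv[of 0] vs0 vsk by simp
  qed
  have st: "\<sigma> (vs ! t) = vs ! (t - 1)" if "1 \<le> t" "t \<le> k" for t
  proof -
    have "\<sigma> (cs ! (k - t)) = cs ! (Suc (k - t) mod Suc k)" using csi[of "k - t"] by simp
    moreover have "Suc (k - t) mod Suc k = Suc (k - t)" using that by simp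
    ultimately show ?thesis using csv[of "k - t"] csv[of "Suc (k - t)"] that
      by (simp add: Suc_diff_le)
  qed
  have "ent E Inp out j (\<sigma> j) \<noteq> 0" if "j < N" for j
  proof (cases "j \<in> set vs")
    case True
    then obtain t where t: "t < Suc k" "j = vs ! t" using lvs by (auto simp: in_set_conv_nth)
    show ?thesis
    proof (cases "t = 0")
      case True
      then show ?thesis using t s0 vs0 mI by (simp add: ent_def)
    next
      case False
      then have st': "\<sigma> j = vs ! (t - 1)" using st[of t] t by simp
      have ne: "vs ! (t - 1) \<noteq> out"
        using vsk dvs lvs False t nth_eq_iff_index_eq[of vs "t - 1" k] by auto
      have "(vs ! (t - 1), vs ! t) \<in> E"
        using edges[of "t - 1"] False t by (simp add: vs_def k_def)
      then show ?thesis using st' ne t by (simp add: ent_def)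
    qed
  next
    case False
    then have "\<sigma> j = j" unfolding \<sigma>_def by (intro id_outside_supp) (simp add: scs)
    moreover have "j \<noteq> out" using False vsk lvs by (metis lessI nth_mem)
    ultimately show ?thesis by (simp add: ent_def)
  qed
  then show ?thesis using perm by blast
qed



theorem corollary3p10:
  fixes N out :: nat and E :: "(nat \<times> nat) set" and Inp :: "nat set"
  assumes "core_network N E Inp out"
    and "card Inp \<ge> 2"
  shows "\<exists>p :: hpoly. irreducible p \<and> homogeneous_deg1_in_inputs Inp p \<and>
           p dvd det (gen_homeo_matrix N E Inp out)"
proof -
  note core = assms(1)
  have InpN: "Inp \<subseteq> {0..<N}" and outN: "out < N" using core by (auto simp: core_network_def)
  have finI: "finite Inp" using InpN finite_subset by blast
  have "Inp \<noteq> {}" using assms(2) by auto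
  then obtain m where mI: "m \<in> Inp" by blast
  obtain \<sigma> where sp: "\<sigma> permutes {0..<N}" and sne: "\<forall>j<N. ent E Inp out j (\<sigma> j) \<noteq> 0"
    using exists_sigma[OF core mI] by blast
  define D where "D = det (gen_homeo_matrix N E Inp out)"
  define c where "c p = (of_int (sign p) * (\<Prod>i=0..<N. ent E Inp out i (p i)) :: real)" for p
  have lD: "Poly_Mapping.lookup D mm = (\<Sum>p\<in>{p. p permutes {0..<N}}. (c p when mu N out p = mm))" for mm
    by (simp add: D_def c_def lookup_det)
  have "Poly_Mapping.lookup D (mu N out \<sigma>) = c \<sigma>"
  proof -
    have "(\<Sum>p\<in>{p. p permutes {0..<N}}. (c p when mu N out p = mu N out \<sigma>))
        = (\<Sum>p\<in>{p. p permutes {0..<N}}. (if p = \<sigma> then c p else 0))"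
    proof (rule sum.cong[OF refl])
      fix p assume "p \<in> {p. p permutes {0..<N}}"
      then have "mu N out p = mu N out \<sigma> \<longleftrightarrow> p = \<sigma>" using mu_inj[OF _ sp, of p out] by auto
      then show "(c p when mu N out p = mu N out \<sigma>) = (if p = \<sigma> then c p else 0)" by (simp add: when_def)
    qed
    also have "\<dots> = c \<sigma>" using sp by (simp add: sum.delta' finite_permutations)
    finally show ?thesis using lD by simp
  qed
  moreover have "c \<sigma> \<noteq> 0" using sne by (simp add: c_def sign_def)
  ultimately have D0: "D \<noteq> 0" by auto
  have "input_degree Inp mm = 1" if "mm \<in> Poly_Mapping.keys D" for mm
  proof -
    have "(\<Sum>p\<in>{p. p permutes {0..<N}}. (c p when mu N out p = mm)) \<noteq> 0"
      using that lD by (simp add: in_keys_iff)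
    then obtain p where pp0: "p \<in> {p. p permutes {0..<N}}" and ne0: "(c p when mu N out p = mm) \<noteq> 0"
      by (meson sum.neutral)
    have pp: "p permutes {0..<N}" using pp0 by simp
    have cp: "c p \<noteq> 0" and mmp: "mu N out p = mm" using ne0 by (auto simp: when_def split: if_splits)
    have ent_ne: "ent E Inp out i (p i) \<noteq> 0" if "i < N" for i
      using cp that by (auto simp: c_def)
    obtain i0 where i0: "p i0 = out" using pp by (metis permutes_surj surjD)
    have i0N: "i0 < N"
    proof (rule ccontr)
      assume "\<not> i0 < N" then have "p i0 = i0" using pp by (simp add: permutes_def)
      then show False using i0 outN \<open>\<not> i0 < N\<close> by simp
    qed
    have i0I: "i0 \<in> Inp" using ent_ne[OF i0N] i0 by (auto simp: ent_def split: if_splits)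
    have "input_degree Inp (mu N out p) = (\<Sum>j\<in>Inp. (if j < N \<and> p j = out then 1 else 0))"
      by (simp add: input_degree_def lookup_mu_FI)
    also have "\<dots> = (\<Sum>j\<in>Inp. (if j = i0 then 1 else 0))"
    proof (rule sum.cong[OF refl])
      fix j assume "j \<in> Inp"
      have "p j = out \<longleftrightarrow> j = i0" using i0 permutes_inj[OF pp] by (auto simp: inj_eq)
      then show "(if j < N \<and> p j = out then 1 else 0) = (if j = i0 then (1::nat) else 0)" using i0N by auto
    qed
    also have "\<dots> = 1" using i0I finI by simp
    finally show ?thesis using mmp by simp
  qed
  then have "homogeneous_deg1_in_inputs Inp D" using D0 by (simp add: homogeneous_deg1_in_inputs_def)
  then show ?thesis using exists_irred unfolding D_def by blast
qed

end
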